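(* Let $R>r>0$ with $R/r>\sqrt{2}$. Then the standard torus $T_{R,r}$ is conformally equivalent to the Hopf torus $\pi^{-1}(p_t)\subset S^3$ (with the metric induced from $S^3$) associated to the circle $p_t$ in $S^2$ parametrized by $$s\mapsto (2t^2-1)+2t\sqrt{1-t^2}\,(\cos(s)\,j+\sin(s)\,k),$$ where $t=r/R$.
   Context: For $R>r>0$, the standard torus $T_{R,r}\subset\mathbb{R}^3$ is the image of $\Phi(\theta,\varphi)=\big((R+r\cos\varphi)\cos\theta,(R+r\cos\varphi)\sin\theta,r\sin\varphi\big)$, $(\theta,\varphi)\in\mathbb{R}^2$, equipped with the complex structure induced by the Euclidean metric of $\mathbb{R}^3$. $Q$ denotes the quaternions, $S^3\subset Q$ the unit quaternions with the round metric, and $S^2$ is identified with the unit sphere in the real span of $1,j,k$. For $q=a+bi+cj+dk$ set $\tilde q=a-bi+cj+dk$; the Hopf map is $\pi:S^3\to S^2$, $\pi(q)=\tilde q q$. The Hopf torus associated to a closed curve $p$ in $S^2$ is $\pi^{-1}(p)$ with the complex structure induced by the metric inherited from $S^3$. *)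

theory Defs
  imports "HOL-Analysis.Analysis"
begin

definition torus_param :: "real \<Rightarrow> real \<Rightarrow> real \<times> real \<Rightarrow> real^3" where
  "torus_param R r = (\<lambda>(\<theta>, \<phi>). vector [(R + r * cos \<phi>) * cos \<theta>,
                                       (R + r * cos \<phi>) * sin \<theta>,
                                       r * sin \<phi>])"

definition std_torus :: "real \<Rightarrow> real \<Rightarrow> (real^3) set" where
  "std_torus R r = range (torus_param R r)"

text \<open>Quaternions a + b i + c j + d k represented as vectors (a,b,c,d) in R^4.\<close>
definition qmul :: "real^4 \<Rightarrow> real^4 \<Rightarrow> real^4" where
  "qmul p q = vector
     [p$1 * q$1 - p$2 * q$2 - p$3 * q$3 - p$4 * q$4,
      p$1 * q$2 + p$2 * q$1 + p$3 * q$4 - p$4 * q$3,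
      p$1 * q$3 - p$2 * q$4 + p$3 * q$1 + p$4 * q$2,
      p$1 * q$4 + p$2 * q$3 - p$3 * q$2 + p$4 * q$1]"

definition qtilde :: "real^4 \<Rightarrow> real^4" where
  "qtilde q = vector [q$1, - q$2, q$3, q$4]"

definition hopf :: "real^4 \<Rightarrow> real^4" where
  "hopf q = qmul (qtilde q) q"

text \<open>Hopf torus over a closed curve p in S^2 (S^2 = unit sphere in span of 1, j, k).\<close>
definition hopf_torus :: "(real \<Rightarrow> real^4) \<Rightarrow> (real^4) set" where
  "hopf_torus p = {q \<in> sphere 0 1. hopf q \<in> range p}"

definition circle_pt :: "real \<Rightarrow> real \<Rightarrow> real^4" where
  "circle_pt t s = vector [2 * t^2 - 1, 0,
                           2 * t * sqrt (1 - t^2) * cos s,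
                           2 * t * sqrt (1 - t^2) * sin s]"

definition conformally_equivalent ::
  "(real \<times> real \<Rightarrow> 'a::euclidean_space) \<Rightarrow> 'b::euclidean_space set \<Rightarrow> bool" where
  "conformally_equivalent \<Phi> Y \<longleftrightarrow>
     (\<exists>F G D lam.
        homeomorphism (range \<Phi>) Y F G \<and>
        (\<forall>p. ((F \<circ> \<Phi>) has_derivative blinfun_apply (D p)) (at p)) \<and>
        continuous_on UNIV D \<and>
        (\<forall>p. lam p > (0::real) \<and>
             (\<forall>u v. blinfun_apply (D p) u \<bullet> blinfun_apply (D p) v =
                    lam p * (frechet_derivative \<Phi> (at p) u \<bullet> frechet_derivative \<Phi> (at p) v))))"

end

theory Submission
  imports Defs
begin

lemma vector_4 [simp]:
 "(vector [x,y,z,w] ::('a::zero)^4)$1 = x"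
 "(vector [x,y,z,w] ::('a::zero)^4)$2 = y"
 "(vector [x,y,z,w] ::('a::zero)^4)$3 = z"
 "(vector [x,y,z,w] ::('a::zero)^4)$4 = w"
  unfolding vector_def by simp_all

lemma vec4_eq: "(vector [a,b,c,d] :: real^4) = a *\<^sub>R axis 1 1 + b *\<^sub>R axis 2 1 + c *\<^sub>R axis 3 1 + d *\<^sub>R axis 4 1"
  by (simp add: vec_eq_iff forall_4 axis_def)

lemma vec3_eq: "(vector [a,b,c] :: real^3) = a *\<^sub>R axis 1 1 + b *\<^sub>R axis 2 1 + c *\<^sub>R axis 3 1"
  by (simp add: vec_eq_iff forall_3 axis_def)

lemma inner4: "(vector [a,b,c,d] :: real^4) \<bullet> vector [a',b',c',d'] = a*a' + b*b' + c*c' + d*d'"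
  by (simp add: inner_vec_def sum_4)

lemma inner3: "(vector [a,b,c] :: real^3) \<bullet> vector [a',b',c'] = a*a' + b*b' + c*c'"
  by (simp add: inner_vec_def sum_3)

lemma vec4_deriv:
  assumes "(f1 has_derivative d1) F" "(f2 has_derivative d2) F" "(f3 has_derivative d3) F" "(f4 has_derivative d4) F"
  shows "((\<lambda>p. vector [f1 p, f2 p, f3 p, f4 p] :: real^4) has_derivative (\<lambda>u. vector [d1 u, d2 u, d3 u, d4 u])) F"
  unfolding vec4_eq
  by (intro has_derivative_add has_derivative_scaleR_left assms)

lemma vec3_deriv:
  assumes "(f1 has_derivative d1) F" "(f2 has_derivative d2) F" "(f3 has_derivative d3) F"
  shows "((\<lambda>p. vector [f1 p, f2 p, f3 p] :: real^3) has_derivative (\<lambda>u. vector [d1 u, d2 u, d3 u])) F"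
  unfolding vec3_eq
  by (intro has_derivative_add has_derivative_scaleR_left assms)

lemma snd_chain:
  assumes "(g has_real_derivative d) (at (snd p))"
  shows "((\<lambda>p. g (snd p)) has_derivative (\<lambda>u. snd u * d)) (at p)"
proof -
  have "((\<lambda>x. g (snd x)) has_derivative (\<lambda>x. d * snd x)) (at p)"
    using has_derivative_compose[OF has_derivative_snd[OF has_derivative_ident] has_field_derivative_imp_has_derivative[OF assms]] by simp
  then show ?thesis by (simp add: mult.commute)
qed

lemma fst_chain:
  assumes "(g has_real_derivative d) (at (fst p))"
  shows "((\<lambda>p. g (fst p)) has_derivative (\<lambda>u. fst u * d)) (at p)"
proof -
  have "((\<lambda>x. g (fst x)) has_derivative (\<lambda>x. d * fst x)) (at p)"
    using has_derivative_compose[OF has_derivative_fst[OF has_derivative_ident] has_field_derivative_imp_has_derivative[OF assms]] by simp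
  then show ?thesis by (simp add: mult.commute)
qed

lemma hopf_comp: "hopf q = vector [q$1^2 + q$2^2 - q$3^2 - q$4^2, 0, 2*(q$1*q$3 + q$2*q$4), 2*(q$1*q$4 - q$2*q$3)]"
  by (simp add: hopf_def qmul_def qtilde_def vec_eq_iff forall_4 power2_eq_square algebra_simps)

lemma hopf_torus_eq:
  assumes "0 < t" "t < 1"
  shows "hopf_torus (circle_pt t) = {y. y$1^2 + y$2^2 = t^2 \<and> y$3^2 + y$4^2 = 1 - t^2}"
proof safe
  fix q assume "q \<in> hopf_torus (circle_pt t)"
  then have n: "q$1^2 + q$2^2 + q$3^2 + q$4^2 = 1" and "\<exists>s. hopf q = circle_pt t s"
    by (auto simp: hopf_torus_def norm_eq_1 inner_vec_def sum_4 power2_eq_square)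
  then obtain s where "hopf q = circle_pt t s" by blast
  then have "q$1^2 + q$2^2 - q$3^2 - q$4^2 = 2*t^2 - 1"
    by (metis circle_pt_def hopf_comp vector_4(1))
  with n show "q$1^2 + q$2^2 = t^2" "q$3^2 + q$4^2 = 1 - t^2" by linarith+
next
  fix q :: "real^4"
  assume a: "q$1^2 + q$2^2 = t^2" and b: "q$3^2 + q$4^2 = 1 - t^2"
  define K where "K = 2 * t * sqrt (1 - t^2)"
  have "t^2 < 1" using assms by (simp add: power_less_one_iff abs_less_iff)
  then have K: "K > 0" using assms by (auto simp: K_def)
  have K2: "K^2 = 4 * t^2 * (1 - t^2)" using assms \<open>t^2 < 1\<close> by (simp add: K_def power_mult_distrib)
  have gen: "(2*X/K)^2 + (2*Y/K)^2 = 4 * (X^2 + Y^2) / K^2" for X Y :: real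
    by (simp add: power_divide power_mult_distrib add_divide_distrib)
  have "(q$1*q$3 + q$2*q$4)^2 + (q$1*q$4 - q$2*q$3)^2 = (q$1^2 + q$2^2) * (q$3^2 + q$4^2)"
    by (simp add: power2_eq_square algebra_simps)
  also have "\<dots> = K^2/4" using a b K2 by simp
  finally have XY: "(q$1*q$3 + q$2*q$4)^2 + (q$1*q$4 - q$2*q$3)^2 = K^2/4" .
  have "(2*(q$1*q$3 + q$2*q$4)/K)^2 + (2*(q$1*q$4 - q$2*q$3)/K)^2
      = 4 * ((q$1*q$3 + q$2*q$4)^2 + (q$1*q$4 - q$2*q$3)^2) / K^2"
    using gen by blast
  also have "\<dots> = 1" using K XY by simp
  finally have e: "(2*(q$1*q$3 + q$2*q$4)/K)^2 + (2*(q$1*q$4 - q$2*q$3)/K)^2 = 1" .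
  obtain s where s: "2*(q$1*q$3 + q$2*q$4)/K = cos s" "2*(q$1*q$4 - q$2*q$3)/K = sin s"
    using sincos_total_2pi[OF e] by metis
  have "hopf q = circle_pt t s"
    using s K a b unfolding hopf_comp circle_pt_def K_def[symmetric]
    by (simp add: vec_eq_iff forall_4 field_simps)
  moreover have "norm q = 1" using a b
    by (simp add: norm_eq_1 inner_vec_def sum_4 power2_eq_square)
  ultimately show "q \<in> hopf_torus (circle_pt t)"
    by (auto simp: hopf_torus_def)
qed

definition Hm :: "real \<Rightarrow> real \<Rightarrow> real \<times> real \<Rightarrow> real^4" where
  "Hm R r = (\<lambda>p. vector [(r/R) * (R * cos (snd p) + r) / (R + r * cos (snd p)),
      (r/R) * sqrt (R^2 - r^2) * sin (snd p) / (R + r * cos (snd p)),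
      sqrt (R^2 - r^2) / R * cos (fst p), sqrt (R^2 - r^2) / R * sin (fst p)])"

definition Fm :: "real \<Rightarrow> real \<Rightarrow> real^3 \<Rightarrow> real^4" where
  "Fm R r x = vector [(r/R) * (R * ((sqrt (x$1^2 + x$2^2) - R) / r) + r) / sqrt (x$1^2 + x$2^2),
      (r/R) * sqrt (R^2 - r^2) * (x$3 / r) / sqrt (x$1^2 + x$2^2),
      sqrt (R^2 - r^2) / R * (x$1 / sqrt (x$1^2 + x$2^2)),
      sqrt (R^2 - r^2) / R * (x$2 / sqrt (x$1^2 + x$2^2))]"

definition Gm :: "real \<Rightarrow> real \<Rightarrow> real^4 \<Rightarrow> real^3" where
  "Gm R r y = vector [
     (R + r * ((R * (y$1*R/r) - r) / (R - r * (y$1*R/r)))) * (y$3 * R / sqrt (R^2 - r^2)),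
     (R + r * ((R * (y$1*R/r) - r) / (R - r * (y$1*R/r)))) * (y$4 * R / sqrt (R^2 - r^2)),
     r * (sqrt (R^2 - r^2) * (y$2*R/r) / (R - r * (y$1*R/r)))]"

lemma torus_param_alt: "torus_param R r = (\<lambda>p. vector [(R + r * cos (snd p)) * cos (fst p),
   (R + r * cos (snd p)) * sin (fst p), r * sin (snd p)])"
  by (auto simp: torus_param_def split_def)

context
  fixes R r :: real
  assumes rR: "0 < r" "r < R"
begin

lemma rho_pos: "R + r * cos x > 0"
proof -
  have "r * (-1) \<le> r * cos x" using rR by (intro mult_left_mono) auto
  then show ?thesis using rR by linarith
qed

lemma k2: "(sqrt (R^2 - r^2))^2 = R^2 - r^2" "sqrt (R^2 - r^2) > 0"
proof -
  have "r^2 < R^2" using rR by (simp add: power_strict_mono)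
  then show "(sqrt (R^2 - r^2))^2 = R^2 - r^2" "sqrt (R^2 - r^2) > 0" by auto
qed

lemma FPhi: "Fm R r (torus_param R r p) = Hm R r p"
proof -
  obtain th ph where p: "p = (th, ph)" by force
  define \<rho> where "\<rho> = R + r * cos ph"
  have rp: "\<rho> > 0" using rho_pos by (simp add: \<rho>_def)
  have "(\<rho> * cos th)^2 + (\<rho> * sin th)^2 = \<rho>^2"
    by (simp add: power_mult_distrib distrib_left[symmetric])
  then have sq: "sqrt ((torus_param R r p $ 1)^2 + (torus_param R r p $ 2)^2) = \<rho>" using rp
    by (simp add: torus_param_alt p \<rho>_def[symmetric])
  show ?thesis
    unfolding Fm_def sq unfolding Hm_def torus_param_alt p using rR rp
    apply (simp add: \<rho>_def[symmetric] vec_eq_iff forall_4)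
    apply (simp add: field_simps \<rho>_def)
    done
qed

lemma GH: "Gm R r (Hm R r p) = torus_param R r p"
proof -
  obtain th ph where p: "p = (th, ph)" by force
  define \<rho> where "\<rho> = R + r * cos ph"
  define k where "k = sqrt (R^2 - r^2)"
  have rp: "\<rho> > 0" using rho_pos by (simp add: \<rho>_def)
  have kk: "k^2 = R^2 - r^2" "k > 0" using k2 by (auto simp: k_def)
  define cb where "cb = Hm R r p $ 1 * R / r"
  define sb where "sb = Hm R r p $ 2 * R / r"
  have cb: "cb = (R * cos ph + r) / \<rho>" using rR unfolding cb_def Hm_def p \<rho>_def by simp
  have sb: "sb = k * sin ph / \<rho>" using rR unfolding sb_def Hm_def p \<rho>_def k_def by simp
  have den: "R - r * cb = k^2 / \<rho>" unfolding cb kk using rp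
    by (simp add: field_simps \<rho>_def power2_eq_square)
  have num: "R * cb - r = k^2 * cos ph / \<rho>" unfolding cb kk using rp
    by (simp add: field_simps \<rho>_def power2_eq_square)
  have c: "(R * cb - r) / (R - r * cb) = cos ph" unfolding num den using rp kk(2) by simp
  have s: "k * sb / (R - r * cb) = sin ph" unfolding sb den using rp kk(2)
    by (simp add: power2_eq_square)
  have ct: "Hm R r p $ 3 * R / k = cos th" "Hm R r p $ 4 * R / k = sin th"
    using rR kk unfolding Hm_def p k_def by auto
  show ?thesis
    unfolding Gm_def cb_def[symmetric] sb_def[symmetric] k_def[symmetric] c s ct
    by (simp add: torus_param_alt p)
qed

lemma Hsurj:
  assumes y: "y$1^2 + y$2^2 = (r/R)^2" "y$3^2 + y$4^2 = 1 - (r/R)^2"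
  shows "\<exists>p. Hm R r p = y"
proof -
  define k where "k = sqrt (R^2 - r^2)"
  have kk: "k^2 = R^2 - r^2" "k > 0" using k2 by (auto simp: k_def)
  define cb where "cb = y$1 * R / r"
  define sb where "sb = y$2 * R / r"
  have cs1: "cb^2 + sb^2 = 1" using y(1) rR unfolding cb_def sb_def
    by (simp add: power_divide power_mult_distrib field_simps)
  then have "cb^2 \<le> 1" by (metis le_add_same_cancel1 zero_le_power2)
  then have "\<bar>cb\<bar> \<le> 1" by (simp add: abs_square_le_1)
  then have "cb \<le> 1" by simp
  then have "r * cb \<le> r * 1" using rR by (intro mult_left_mono) auto
  then have D: "R - r * cb > 0" using rR by linarith
  define c where "c = (R * cb - r) / (R - r * cb)"
  define s where "s = k * sb / (R - r * cb)"
  have "(R * cb - r)^2 + k^2 * sb^2 = (R - r * cb)^2"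
  proof -
    have sb2: "sb^2 = 1 - cb^2" using cs1 by simp
    show ?thesis unfolding kk sb2 by (simp add: power2_eq_square algebra_simps)
  qed
  then have cs2: "c^2 + s^2 = 1" using D unfolding c_def s_def
    by (simp add: power_divide power_mult_distrib field_simps)
  obtain ph where ph: "c = cos ph" "s = sin ph" using sincos_total_2pi[OF cs2] by metis
  define ct where "ct = y$3 * R / k"
  define st where "st = y$4 * R / k"
  have cs3: "ct^2 + st^2 = 1" using y(2) rR kk unfolding ct_def st_def
    by (simp add: power_divide power_mult_distrib field_simps)
  obtain th where th: "ct = cos th" "st = sin th" using sincos_total_2pi[OF cs3] by metis
  have den: "R + r * c = k^2 / (R - r * cb)" unfolding c_def kk using D
    by (simp add: field_simps power2_eq_square)
  have num: "R * c + r = k^2 * cb / (R - r * cb)" unfolding c_def kk using D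
    by (simp add: field_simps power2_eq_square)
  have "Hm R r (th, ph) = y"
  proof -
    have e1: "(r/R) * (R * c + r) / (R + r * c) = y$1"
      unfolding num den using D kk(2) rR by (simp add: cb_def)
    have e2: "(r/R) * k * s / (R + r * c) = y$2"
      unfolding s_def den using D kk(2) rR by (simp add: sb_def power2_eq_square)
    have e3: "k / R * ct = y$3" "k / R * st = y$4" using kk(2) rR by (auto simp: ct_def st_def)
    show ?thesis using e1 e2 e3 unfolding Hm_def ph th k_def
      by (simp add: vec_eq_iff forall_4)
  qed
  then show ?thesis by blast
qed

lemma rnz: "r \<noteq> 0" and knz: "sqrt (R^2 - r^2) \<noteq> 0" using rR k2 by auto

lemma sqrt_Phi: "sqrt ((torus_param R r p $ 1)^2 + (torus_param R r p $ 2)^2) = R + r * cos (snd p)"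
proof -
  define \<rho> where "\<rho> = R + r * cos (snd p)"
  have rp: "\<rho> > 0" using rho_pos by (simp add: \<rho>_def)
  have "(\<rho> * cos (fst p))^2 + (\<rho> * sin (fst p))^2 = \<rho>^2"
    by (simp add: power_mult_distrib distrib_left[symmetric])
  then show ?thesis using rp
    by (simp add: torus_param_alt \<rho>_def[symmetric])
qed

lemma contF: "continuous_on (range (torus_param R r)) (Fm R r)"
proof -
  have nz: "\<forall>x\<in>range (torus_param R r). sqrt ((x $ 1)^2 + (x $ 2)^2) \<noteq> 0"
  proof
    fix x assume "x \<in> range (torus_param R r)"
    then obtain p where "x = torus_param R r p" by blast
    then show "sqrt ((x $ 1)^2 + (x $ 2)^2) \<noteq> 0"
      using sqrt_Phi[of p] rho_pos[of "snd p"] by simp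
  qed
  show ?thesis unfolding Fm_def vec4_eq
    apply (intro continuous_intros)
    using nz rnz knz by blast+
qed

definition "TT = {y::real^4. y$1^2 + y$2^2 = (r/R)^2 \<and> y$3^2 + y$4^2 = 1 - (r/R)^2}"

lemma contG: "continuous_on TT (Gm R r)"
proof -
  have nz: "R - r * (y$1 * R / r) \<noteq> 0" if "y \<in> TT" for y
  proof -
    from that have "y$1^2 \<le> (r/R)^2" unfolding TT_def
      by (metis (mono_tags, lifting) le_add_same_cancel1 mem_Collect_eq zero_le_power2)
    then have "y$1^2 * (R/r)^2 \<le> (r/R)^2 * (R/r)^2" by (simp add: mult_right_mono)
    also have "\<dots> = 1" using rR by (simp add: power_divide)
    finally have "(y$1 * R / r)^2 \<le> 1" by (simp add: power_mult_distrib power_divide)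
    then have "\<bar>y$1 * R / r\<bar> \<le> 1" by (simp add: abs_square_le_1)
    then have "y$1 * R / r \<le> 1" by (metis abs_le_D1)
    then have "r * (y$1 * R / r) \<le> r * 1" using rR by (intro mult_left_mono) auto
    then show ?thesis using rR by linarith
  qed
  show ?thesis unfolding Gm_def vec3_eq
    apply (intro continuous_intros)
    using nz rnz knz by blast+
qed

definition a1 :: "real \<Rightarrow> real" where "a1 x = - (r/R) * (R^2 - r^2) * sin x / (R + r * cos x)^2"
definition a2 :: "real \<Rightarrow> real" where "a2 x = (r/R) * sqrt (R^2 - r^2) * (R * cos x + r) / (R + r * cos x)^2"

definition dHm :: "real \<times> real \<Rightarrow> real \<times> real \<Rightarrow> real^4" where "dHm p u = vector [snd u * a1 (snd p), snd u * a2 (snd p),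
   fst u * (sqrt (R^2 - r^2) / R * - sin (fst p)), fst u * (sqrt (R^2 - r^2) / R * cos (fst p))]"

definition dPhi :: "real \<times> real \<Rightarrow> real \<times> real \<Rightarrow> real^3" where "dPhi p u = vector [
   (R + r * cos (snd p)) * (fst u * - sin (fst p)) + snd u * - (r * sin (snd p)) * cos (fst p),
   (R + r * cos (snd p)) * (fst u * cos (fst p)) + snd u * - (r * sin (snd p)) * sin (fst p),
   snd u * (r * cos (snd p))]"

lemma d_a1: "((\<lambda>x. (r/R) * (R * cos x + r) / (R + r * cos x)) has_real_derivative a1 x) (at x)"
proof -
  have nz: "R + r * cos x \<noteq> 0" using rho_pos[of x] by simp
  have f: "((\<lambda>x. (r/R) * (R * cos x + r)) has_real_derivative (r/R) * (R * - sin x)) (at x)"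
    by (auto intro!: derivative_eq_intros)
  have g: "((\<lambda>x. R + r * cos x) has_real_derivative - (r * sin x)) (at x)"
    by (auto intro!: derivative_eq_intros)
  have e: "(r/R) * (R * - sin x) * (R + r * cos x) - (r/R) * (R * cos x + r) * - (r * sin x)
      = - (r/R) * (R^2 - r^2) * sin x"
    by (simp add: algebra_simps power2_eq_square)
  show ?thesis using DERIV_divide[OF f g nz] unfolding a1_def e
    by (simp add: power2_eq_square)
qed

lemma d_a2: "((\<lambda>x. (r/R) * sqrt (R^2 - r^2) * sin x / (R + r * cos x)) has_real_derivative a2 x) (at x)"
proof -
  have nz: "R + r * cos x \<noteq> 0" using rho_pos[of x] by simp
  have f: "((\<lambda>x. (r/R) * sqrt (R^2 - r^2) * sin x) has_real_derivative (r/R) * sqrt (R^2 - r^2) * cos x) (at x)"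
    using rR by (auto intro!: derivative_eq_intros)
  have g: "((\<lambda>x. R + r * cos x) has_real_derivative - (r * sin x)) (at x)"
    by (auto intro!: derivative_eq_intros)
  have sc: "sin x * sin x = 1 - cos x * cos x" using sin_squared_eq[of x] by (simp add: power2_eq_square)
  have e: "(r/R) * sqrt (R^2 - r^2) * cos x * (R + r * cos x) - (r/R) * sqrt (R^2 - r^2) * sin x * - (r * sin x)
      = (r/R) * sqrt (R^2 - r^2) * (R * cos x + r)"
  proof -
    have g1: "A * cos x * B - A * sin x * - (r * sin x) = A * (cos x * B + r * (sin x * sin x))" for A B :: real
      by (simp add: algebra_simps)
    have g2: "cos x * (R + r * cos x) + r * (1 - cos x * cos x) = R * cos x + r"
      by (simp add: algebra_simps)
    show ?thesis unfolding g1 sc g2 ..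
  qed
  show ?thesis using DERIV_divide[OF f g nz] unfolding a2_def e
    by (simp add: power2_eq_square)
qed

lemma d_rc: "((\<lambda>x. R + r * cos x) has_real_derivative (- (r * sin x))) (at x)"
  by (auto intro!: derivative_eq_intros)

lemma d_rs: "((\<lambda>x. r * sin x) has_real_derivative (r * cos x)) (at x)"
  by (auto intro!: derivative_eq_intros)

lemma d_kc: "((\<lambda>x. sqrt (R^2 - r^2) / R * cos x) has_real_derivative (sqrt (R^2 - r^2) / R * - sin x)) (at x)"
  using rR by (auto intro!: derivative_eq_intros)

lemma d_ks: "((\<lambda>x. sqrt (R^2 - r^2) / R * sin x) has_real_derivative (sqrt (R^2 - r^2) / R * cos x)) (at x)"
  using rR by (auto intro!: derivative_eq_intros)

lemma H_deriv: "(Hm R r has_derivative dHm p) (at p)"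
  unfolding Hm_def dHm_def
  by (intro vec4_deriv snd_chain fst_chain d_a1 d_a2 d_kc d_ks)

lemma Phi_deriv: "(torus_param R r has_derivative dPhi p) (at p)"
  unfolding torus_param_alt dPhi_def
  by (intro vec3_deriv has_derivative_mult snd_chain fst_chain d_rc d_rs DERIV_cos DERIV_sin)

lemma inner_dPhi: "dPhi p u \<bullet> dPhi p v = fst u * fst v * (R + r * cos (snd p))^2 + snd u * snd v * r^2"
proof -
  have "dPhi p u \<bullet> dPhi p v = fst u * fst v * (R + r * cos (snd p))^2 * ((sin (fst p))^2 + (cos (fst p))^2)
     + snd u * snd v * r^2 * ((sin (snd p))^2 * ((cos (fst p))^2 + (sin (fst p))^2) + (cos (snd p))^2)"
  proof -
    have gen: "vector [B * (U * - S1) + V * - (r * S2) * C1, B * (U * C1) + V * - (r * S2) * S1, V * (r * C2)]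
      \<bullet> (vector [B * (U' * - S1) + V' * - (r * S2) * C1, B * (U' * C1) + V' * - (r * S2) * S1, V' * (r * C2)] :: real^3)
      = U * U' * B^2 * (S1^2 + C1^2) + V * V' * r^2 * (S2^2 * (C1^2 + S1^2) + C2^2)"
      for B U V U' V' S1 C1 S2 C2 :: real
      unfolding inner3 by (simp add: power2_eq_square algebra_simps)
    show ?thesis unfolding dPhi_def by (rule gen)
  qed
  then show ?thesis by (simp only: sin_cos_squared_add sin_cos_squared_add2 mult_1_right)
qed

lemma inner_dHm: "dHm p u \<bullet> dHm p v = fst u * fst v * ((R^2 - r^2) / R^2) + snd u * snd v * ((r/R)^2 * (R^2 - r^2) / (R + r * cos (snd p))^2)"
proof -
  define x where "x = snd p"
  have kk: "(sqrt (R^2 - r^2))^2 = R^2 - r^2" using k2 by simp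
  have "dHm p u \<bullet> dHm p v = fst u * fst v * (sqrt (R^2 - r^2) / R)^2 * ((sin (fst p))^2 + (cos (fst p))^2)
     + snd u * snd v * ((a1 x)^2 + (a2 x)^2)"
  proof -
    have gen: "vector [V * A1, V * A2, U * (K * - S), U * (K * C)]
      \<bullet> (vector [V' * A1, V' * A2, U' * (K * - S), U' * (K * C)] :: real^4)
      = U * U' * K^2 * (S^2 + C^2) + V * V' * (A1^2 + A2^2)"
      for A1 A2 K U V U' V' S C :: real
      unfolding inner4 by (simp add: power2_eq_square algebra_simps)
    show ?thesis unfolding dHm_def x_def by (rule gen)
  qed
  also have "(a1 x)^2 + (a2 x)^2 = (r/R)^2 * (R^2 - r^2) / (R + r * cos x)^2"
  proof -
    have rp: "R + r * cos x > 0" using rho_pos by simp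
    have gen: "(X / P^2)^2 + (Y / P^2)^2 = (X^2 + Y^2) / P^4" for X Y P :: real
      by (simp add: power_divide add_divide_distrib flip: power_mult)
    have A: "(a1 x)^2 + (a2 x)^2 = (((r/R) * (R^2 - r^2) * sin x)^2 + ((r/R) * sqrt (R^2 - r^2) * (R * cos x + r))^2) / (R + r * cos x)^4"
      unfolding a1_def a2_def gen by simp
    have sc2: "(sin x)^2 = 1 - (cos x)^2" by (simp add: sin_squared_eq)
    have B: "((r/R) * (R^2 - r^2) * sin x)^2 + ((r/R) * sqrt (R^2 - r^2) * (R * cos x + r))^2
        = (r/R)^2 * (R^2 - r^2) * ((R^2 - r^2) * (sin x)^2 + (R * cos x + r)^2)"
    proof -
      have gen: "(A*K*S)^2 + (A*k*N)^2 = A^2*K*(K*S^2 + N^2)" if "k^2 = K" for A K k S N :: real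
        unfolding power_mult_distrib that by (simp add: power2_eq_square algebra_simps)
      show ?thesis by (rule gen[OF kk])
    qed
    have C: "(R^2 - r^2) * (sin x)^2 + (R * cos x + r)^2 = (R + r * cos x)^2"
      unfolding sc2 by (simp add: power2_eq_square algebra_simps)
    have E: "Z * P^2 / P^4 = Z / P^2" if "P \<noteq> 0" for Z P :: real
    proof -
      have "P^4 = P^2 * P^2" by (simp flip: power_add)
      show ?thesis unfolding \<open>P^4 = P^2 * P^2\<close>
        by (rule mult_divide_mult_cancel_right) (simp add: that)
    qed
    show ?thesis unfolding A B C by (rule E) (use rp in simp)
  qed
  finally show ?thesis using rR by (simp add: x_def power_divide kk)
qed

lemma Hm_in: "Hm R r p \<in> TT"
proof -
  define x where "x = snd p"
  have kk: "(sqrt (R^2 - r^2))^2 = R^2 - r^2" using k2 by simp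
  have rp: "R + r * cos x > 0" using rho_pos by simp
  have sc2: "(sin x)^2 = 1 - (cos x)^2" by (simp add: sin_squared_eq)
  have e: "(R * cos x + r)^2 + (R^2 - r^2) * (sin x)^2 = (R + r * cos x)^2"
    unfolding sc2 by (simp add: power2_eq_square algebra_simps)
  have "(Hm R r p $ 1)^2 + (Hm R r p $ 2)^2 = (r/R)^2 * ((R * cos x + r)^2 + (R^2 - r^2) * (sin x)^2) / (R + r * cos x)^2"
  proof -
    have gen: "(A*N/P)^2 + (A*k*S/P)^2 = A^2*(N^2 + k^2*S^2)/P^2" for A N P k S :: real
      by (simp add: power_divide power_mult_distrib add_divide_distrib distrib_left mult.assoc)
    show ?thesis unfolding Hm_def x_def by (simp add: gen kk, simp add: power_divide power_mult_distrib)
  qed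
  also have "\<dots> = (r/R)^2" unfolding e using rp by simp
  finally have 1: "(Hm R r p $ 1)^2 + (Hm R r p $ 2)^2 = (r/R)^2" .
  have g: "(K*C)^2 + (K*S)^2 = K^2" if "S^2 + C^2 = 1" for K C S :: real
    by (metis that distrib_left mult_1_right power_mult_distrib add.commute)
  have "(Hm R r p $ 3)^2 + (Hm R r p $ 4)^2 = (sqrt (R^2 - r^2) / R)^2"
    unfolding Hm_def by (simp only: vector_4 g sin_cos_squared_add)
  also have "\<dots> = 1 - (r/R)^2" using rR by (simp add: power_divide kk field_simps)
  finally show ?thesis using 1 by (simp add: TT_def)
qed

lemma cont_dHm: "continuous_on UNIV (\<lambda>x. dHm x i)"
proof -
  have nz: "\<forall>x\<in>UNIV. (R + r * cos (snd x))^2 \<noteq> 0" using rho_pos by (simp add: less_imp_neq[symmetric])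
  show ?thesis unfolding dHm_def vec4_eq a1_def a2_def
    apply (intro continuous_intros)
    using nz by auto
qed

end

theorem corollary3:
  fixes R r t :: real
  assumes "R > r" and "r > 0" and "R / r > sqrt 2" and "t = r / R"
  shows "conformally_equivalent (torus_param R r) (hopf_torus (circle_pt t))"
proof -
  have rR: "0 < r" "r < R" using assms by auto
  have t: "0 < t" "t < 1" using assms by auto
  have HT: "hopf_torus (circle_pt t) = TT R r"
    using hopf_torus_eq[OF t] by (simp add: TT_def[OF rR] assms(4))
  define D where "D p = Blinfun (dHm R r p)" for p
  have DA: "blinfun_apply (D p) = dHm R r p" for p
    unfolding D_def
    by (rule bounded_linear_Blinfun_apply, rule has_derivative_bounded_linear, rule H_deriv[OF rR])
  have homeo: "homeomorphism (range (torus_param R r)) (TT R r) (Fm R r) (Gm R r)"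
  proof (rule homeomorphismI)
    show "continuous_on (range (torus_param R r)) (Fm R r)" by (rule contF[OF rR])
    show "continuous_on (TT R r) (Gm R r)" by (rule contG[OF rR])
    show "Fm R r ` range (torus_param R r) \<subseteq> TT R r"
      using FPhi[OF rR] Hm_in[OF rR] by auto
    show "Gm R r ` TT R r \<subseteq> range (torus_param R r)"
    proof
      fix z assume "z \<in> Gm R r ` TT R r"
      then obtain y where y: "y \<in> TT R r" "z = Gm R r y" by blast
      then obtain p where "Hm R r p = y" using Hsurj[OF rR] unfolding TT_def[OF rR] by blast
      then show "z \<in> range (torus_param R r)" using y GH[OF rR] by (metis rangeI)
    qed
    show "Gm R r (Fm R r x) = x" if "x \<in> range (torus_param R r)" for x
      using that FPhi[OF rR] GH[OF rR] by auto
    show "Fm R r (Gm R r y) = y" if yT: "y \<in> TT R r" for y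
    proof -
      obtain p where "Hm R r p = y" using Hsurj[OF rR] yT unfolding TT_def[OF rR] by blast
      then show ?thesis using FPhi[OF rR, of p] GH[OF rR, of p] by simp
    qed
  qed
  have comp: "Fm R r \<circ> torus_param R r = Hm R r"
    using FPhi[OF rR] by (auto simp: o_def)
  have cD: "continuous_on UNIV D"
  proof (rule continuous_at_imp_continuous_on, rule ballI)
    fix p :: "real \<times> real"
    show "continuous (at p) D"
    proof (rule continuous_blinfun_componentwiseI1)
      fix i :: "real \<times> real"
      show "continuous (at p) (\<lambda>x. blinfun_apply (D x) i)"
        unfolding DA using cont_dHm[OF rR, of i] continuous_on_eq_continuous_at[OF open_UNIV]
        by (metis UNIV_I)
    qed
  qed
  define lam where "lam p = (R^2 - r^2) / (R^2 * (R + r * cos (snd p))^2)" for p :: "real \<times> real"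
  have lam: "lam p > 0" for p
  proof -
    have "r^2 < R^2" using rR by (simp add: power_strict_mono)
    then show ?thesis using rho_pos[OF rR, of "snd p"] rR unfolding lam_def
      by (intro divide_pos_pos mult_pos_pos) auto
  qed
  have conf: "blinfun_apply (D p) u \<bullet> blinfun_apply (D p) v =
       lam p * (frechet_derivative (torus_param R r) (at p) u \<bullet> frechet_derivative (torus_param R r) (at p) v)"
    for p u v
  proof -
    have fd: "frechet_derivative (torus_param R r) (at p) = dPhi R r p"
      using frechet_derivative_at[OF Phi_deriv[OF rR]] by simp
    have rp: "R + r * cos (snd p) > 0" using rho_pos[OF rR] by simp
    have gen: "U * (K / R^2) + V * ((r/R)^2 * K / P^2) = K / (R^2 * P^2) * (U * P^2 + V * r^2)"
      if "P \<noteq> 0" "R \<noteq> 0" for U V K P :: real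
      using that by (simp add: field_simps power_divide)
    show ?thesis unfolding DA fd inner_dPhi[OF rR] inner_dHm[OF rR] lam_def
      by (rule gen) (use rp rR in auto)
  qed
  show ?thesis
    unfolding conformally_equivalent_def HT
    apply (rule exI[of _ "Fm R r"], rule exI[of _ "Gm R r"], rule exI[of _ D], rule exI[of _ lam])
    using homeo cD lam conf H_deriv[OF rR] by (simp add: comp DA)
qed

end
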